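(* Let $C:=\sqrt{\frac{15+\sqrt{65}}{8}}$ and let $g:\mathbb{R}\to\mathbb{R}$ be $$g(z):=-\frac{2}{5}z^4+\frac{8}{5}Cz^3+\Big(\frac32-\frac{12}{5}C^2\Big)z^2+\Big(\frac85C^3-3C\Big)z+1 .$$ For $W=[w_1,w_2,w_3]$ with $w_1,w_2,w_3\in\mathbb{R}^3$, define $f(\cdot;W):\mathbb{R}^3\to\mathbb{R}^3$ by $f(x;W):=[g(\langle w_1,x\rangle),g(\langle w_2,x\rangle),g(\langle w_3,x\rangle)]^\top$. Then there exists such a $W$ for which $f(\cdot;W)$ has two distinct fixed points $p_1,p_2\in\mathbb{R}^3$ such that for each $i\in\{1,2\}$ there exist constants $\epsilon_i>0$, $c_i>0$ and $K_i\in[0,1)$ with the following property: for every initial point $x^{(0)}\in[p_{i,1}-\epsilon_i,p_{i,1}+\epsilon_i]\times\{1\}\times\{1\}$, the fixed-point iteration $x^{(t)}=f(x^{(t-1)};W)$ ($t\ge1$) converges to $p_i$, and for every $t\ge2$, $$\|x^{(t)}-p_i\|_\infty\le K_i^t\cdot c_i\epsilon_i .$$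
   Context: $p_{i,1}$ denotes the first coordinate of $p_i$; $\|\cdot\|_\infty$ is the $\ell_\infty$ norm. A fixed point of $F$ is a point $p$ with $F(p)=p$. *)

theory Defs
  imports "HOL-Analysis.Analysis"
begin

definition Cconst :: real where
  "Cconst = sqrt ((15 + sqrt 65) / 8)"

definition gB4 :: "real \<Rightarrow> real" where
  "gB4 z = - (2/5) * z^4 + (8/5) * Cconst * z^3 + (3/2 - (12/5) * Cconst^2) * z^2
           + ((8/5) * Cconst^3 - 3 * Cconst) * z + 1"

definition fB4 :: "real^3^3 \<Rightarrow> real^3 \<Rightarrow> real^3" where
  "fB4 W x = (\<chi> i. gB4 ((W $ i) \<bullet> x))"

end

theory Submission
  imports Defs
begin

lemma attract:
  fixes h h' :: "real \<Rightarrow> real"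
  assumes d: "\<And>x. (h has_real_derivative h' x) (at x)" and c: "isCont h' p"
    and z: "h' p = 0" and fp: "h p = p"
  shows "\<exists>\<epsilon>>0. \<forall>x. \<bar>x - p\<bar> \<le> \<epsilon> \<longrightarrow> \<bar>h x - p\<bar> \<le> \<bar>x - p\<bar> / 2"
proof -
  have "\<forall>r>0. \<exists>s>0. \<forall>y. y \<noteq> p \<and> norm (y - p) < s \<longrightarrow> norm (h' y - h' p) < r"
    using c unfolding isCont_def LIM_eq by simp
  then obtain \<delta> where dp: "\<delta> > 0" and hd0: "\<forall>y. y \<noteq> p \<and> \<bar>y - p\<bar> < \<delta> \<longrightarrow> \<bar>h' y\<bar> < 1/2"
    using z by (drule_tac x="1/2" in spec) auto
  have hd: "\<bar>h' y\<bar> < 1/2" if "\<bar>y - p\<bar> < \<delta>" for y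
    using hd0 that z by (cases "y = p") auto
  show ?thesis
  proof (intro exI[of _ "\<delta>/2"] conjI allI impI)
    show "\<delta>/2 > 0" using dp by simp
    fix x assume xa: "\<bar>x - p\<bar> \<le> \<delta>/2"
    consider "x = p" | "x < p" | "p < x" by linarith
    then show "\<bar>h x - p\<bar> \<le> \<bar>x - p\<bar> / 2"
    proof cases
      case 1 then show ?thesis using fp by simp
    next
      case 2
      then obtain w where w: "x < w" "w < p" "h p - h x = (p - x) * h' w"
        using MVT2[of x p h h'] d by blast
      have "\<bar>h' w\<bar> < 1/2" using hd w xa dp 2 by auto
      then have "\<bar>(p - x) * h' w\<bar> \<le> \<bar>x - p\<bar> / 2" using 2 by (simp add: abs_mult)
      then show ?thesis using w fp by (simp add: abs_minus_commute)
    next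
      case 3
      then obtain w where w: "p < w" "w < x" "h x - h p = (x - p) * h' w"
        using MVT2[of p x h h'] d by blast
      have "\<bar>h' w\<bar> < 1/2" using hd w xa dp 3 by auto
      then have "\<bar>(x - p) * h' w\<bar> \<le> \<bar>x - p\<bar> / 2" using 3 by (simp add: abs_mult)
      then show ?thesis using w fp by simp
    qed
  qed
qed

lemma iter_bound:
  fixes h :: "real \<Rightarrow> real"
  assumes "\<forall>x. \<bar>x - p\<bar> \<le> \<epsilon> \<longrightarrow> \<bar>h x - p\<bar> \<le> \<bar>x - p\<bar> / 2" "\<bar>x0 - p\<bar> \<le> \<epsilon>"
  shows "\<bar>(h ^^ t) x0 - p\<bar> \<le> (1/2)^t * \<epsilon>"
proof (induction t)
  case 0 then show ?case using assms by simp
next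
  case (Suc t)
  have "(1/2::real)^t * \<epsilon> \<le> \<epsilon>"
    using assms(2) by (simp add: mult_left_le_one_le power_le_one)
  then have "\<bar>h ((h ^^ t) x0) - p\<bar> \<le> \<bar>(h ^^ t) x0 - p\<bar> / 2" using assms(1) Suc by auto
  then show ?case using Suc by simp
qed

definition gd :: "real \<Rightarrow> real" where
  "gd z = -(8/5) * z^3 + (24/5) * Cconst * z^2 + 2 * (3/2 - (12/5) * Cconst^2) * z + ((8/5) * Cconst^3 - 3 * Cconst)"

lemma g_deriv: "(gB4 has_real_derivative gd z) (at z)"
  unfolding gB4_def[abs_def] gd_def
  apply (rule derivative_eq_intros refl)+
  apply (simp add: field_simps power2_eq_square power3_eq_cube)
  done

lemma gd_cont: "isCont gd z"
  unfolding gd_def by (intro continuous_intros)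

lemma gd_shift: "gd (Cconst + u) = u * (3 - (8/5) * u^2)"
  unfolding gd_def power2_eq_square power3_eq_cube by (simp add: field_simps)

lemma g_shift: "gB4 (Cconst + u) - gB4 Cconst = -(2/5) * u^4 + (3/2) * u^2"
  unfolding gB4_def power2_eq_square power3_eq_cube power4_eq_xxxx by (simp add: field_simps)

lemma g0: "gB4 0 = 1" unfolding gB4_def by simp

lemma fB4_comp:
  fixes a b :: real
  defines "W \<equiv> vector [vector [a, b, 0], 0, 0] :: real^3^3"
  shows "fB4 W y $ 1 = gB4 (a * y$1 + b * y$2)" "fB4 W y $ 2 = 1" "fB4 W y $ 3 = 1"
  unfolding W_def fB4_def by (simp_all add: inner_vec_def sum_3 g0)

lemma iter_comp:
  fixes a b :: real
  assumes "x0 $ 2 = 1" "x0 $ 3 = 1"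
  shows "(fB4 (vector [vector [a, b, 0], 0, 0]) ^^ t) x0 $ 1 = ((\<lambda>x. gB4 (a * x + b)) ^^ t) (x0 $ 1) \<and>
         (fB4 (vector [vector [a, b, 0], 0, 0]) ^^ t) x0 $ 2 = 1 \<and> (fB4 (vector [vector [a, b, 0], 0, 0]) ^^ t) x0 $ 3 = 1"
proof (induction t)
  case 0 then show ?case using assms by simp
next
  case (Suc t) then show ?case using fB4_comp[of a b] by simp
qed

lemma norm_vec3: "norm (x :: real^3) = sqrt ((x$1)^2 + (x$2)^2 + (x$3)^2)"
  unfolding norm_vec_def L2_set_def by (simp add: sum_3)

lemma part:
  fixes a b q :: real
  defines "W \<equiv> vector [vector [a, b, 0], 0, 0] :: real^3^3"
  assumes fq: "gB4 (a * q + b) = q" and dq: "gd (a * q + b) = 0"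
  shows "\<exists>\<epsilon> c K :: real. \<epsilon> > 0 \<and> c > 0 \<and> 0 \<le> K \<and> K < 1 \<and>
        (\<forall>x0 :: real^3. x0 $ 1 \<in> {q - \<epsilon> .. q + \<epsilon>} \<and> x0 $ 2 = 1 \<and> x0 $ 3 = 1 \<longrightarrow>
           ((\<lambda>t. (fB4 W ^^ t) x0) \<longlonglongrightarrow> vector [q,1,1]) \<and>
           (\<forall>t::nat. t \<ge> 2 \<longrightarrow> infnorm ((fB4 W ^^ t) x0 - vector [q,1,1]) \<le> K ^ t * c * \<epsilon>))"
proof -
  define h where "h = (\<lambda>x. gB4 (a * x + b))"
  define h' where "h' = (\<lambda>x. gd (a * x + b) * a)"
  have d: "\<And>x. (h has_real_derivative h' x) (at x)"
    unfolding h_def h'_def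
    by (rule DERIV_chain2[OF g_deriv]) (auto intro!: derivative_eq_intros)
  have c: "isCont h' q" unfolding h'_def
    by (intro continuous_intros isCont_o2[OF _ gd_cont])
  obtain \<epsilon> where ep: "\<epsilon> > 0" and hb: "\<forall>x. \<bar>x - q\<bar> \<le> \<epsilon> \<longrightarrow> \<bar>h x - q\<bar> \<le> \<bar>x - q\<bar> / 2"
    using attract[OF d c] dq fq unfolding h_def h'_def by auto
  have ALL: "\<forall>x0 :: real^3. x0 $ 1 \<in> {q - \<epsilon> .. q + \<epsilon>} \<and> x0 $ 2 = 1 \<and> x0 $ 3 = 1 \<longrightarrow>
           ((\<lambda>t. (fB4 W ^^ t) x0) \<longlonglongrightarrow> vector [q,1,1]) \<and>
           (\<forall>t::nat. t \<ge> 2 \<longrightarrow> infnorm ((fB4 W ^^ t) x0 - vector [q,1,1]) \<le> (1/2) ^ t * 1 * \<epsilon>)"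
    proof (intro allI impI conjI)
    fix x0 :: "real^3"
    assume as: "x0 $ 1 \<in> {q - \<epsilon> .. q + \<epsilon>} \<and> x0 $ 2 = 1 \<and> x0 $ 3 = 1"
    then have x1: "\<bar>x0 $ 1 - q\<bar> \<le> \<epsilon>" by auto
    have nrm: "norm ((fB4 W ^^ t) x0 - vector [q,1,1]) = \<bar>(h ^^ t) (x0 $ 1) - q\<bar>" for t
      using iter_comp[of x0 t a b] as unfolding W_def h_def by (simp add: norm_vec3)
    have bnd: "norm ((fB4 W ^^ t) x0 - vector [q,1,1]) \<le> (1/2)^t * \<epsilon>" for t
      using nrm iter_bound[OF hb x1] by simp
    show "(\<lambda>t. (fB4 W ^^ t) x0) \<longlonglongrightarrow> vector [q,1,1]"
    proof (rule LIM_zero_cancel, rule tendsto_norm_zero_cancel)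
      have "(\<lambda>t. (1/2::real)^t * \<epsilon>) \<longlonglongrightarrow> 0 * \<epsilon>"
        by (intro tendsto_mult tendsto_const LIMSEQ_realpow_zero) auto
      then have "(\<lambda>t. (1/2::real)^t * \<epsilon>) \<longlonglongrightarrow> 0" by simp
      then show "(\<lambda>t. norm ((fB4 W ^^ t) x0 - vector [q,1,1])) \<longlonglongrightarrow> 0"
        by (rule Lim_null_comparison[rotated]) (use bnd in \<open>simp add: always_eventually\<close>)
    qed
    fix t :: nat
    show "infnorm ((fB4 W ^^ t) x0 - vector [q,1,1]) \<le> (1/2) ^ t * 1 * \<epsilon>"
      using bnd[of t] infnorm_le_norm[of "(fB4 W ^^ t) x0 - vector [q,1,1]"] by simp
  qed
  show ?thesis
    apply (rule exI[of _ \<epsilon>], rule exI[of _ "1::real"], rule exI[of _ "1/2::real"])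
    using ep ALL by simp
qed

theorem lemmaB4:
  shows "\<exists>W :: real^3^3. \<exists>p1 p2 :: real^3.
     fB4 W p1 = p1 \<and> fB4 W p2 = p2 \<and> p1 \<noteq> p2 \<and>
     (\<forall>p \<in> {p1, p2}. \<exists>\<epsilon> c K :: real. \<epsilon> > 0 \<and> c > 0 \<and> 0 \<le> K \<and> K < 1 \<and>
        (\<forall>x0 :: real^3. x0 $ 1 \<in> {p $ 1 - \<epsilon> .. p $ 1 + \<epsilon>} \<and> x0 $ 2 = 1 \<and> x0 $ 3 = 1 \<longrightarrow>
           ((\<lambda>t. (fB4 W ^^ t) x0) \<longlonglongrightarrow> p) \<and>
           (\<forall>t::nat. t \<ge> 2 \<longrightarrow> infnorm ((fB4 W ^^ t) x0 - p) \<le> K ^ t * c * \<epsilon>)))"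
proof -
  define s where "s = sqrt (15/8 :: real)"
  define m where "m = gB4 Cconst"
  define M where "M = gB4 (Cconst + s)"
  have s2: "s^2 = 15/8" unfolding s_def by simp
  have s4: "s^4 = 225/64" proof -
    have "s^4 = (s^2)^2" by simp
    also have "... = 225/64" unfolding s2 by (simp add: power2_eq_square)
    finally show ?thesis .
  qed
  have Mm: "M - m = 45/32" unfolding M_def m_def using g_shift[of s] s2 s4 by simp
  define a where "a = s / (M - m)"
  define b where "b = Cconst - a * m"
  have e1: "a * m + b = Cconst" unfolding b_def by simp
  have e2': "a * (M - m) = s" unfolding a_def using Mm by simp
  have e2: "a * M + b = Cconst + s" unfolding b_def using e2'
    by (simp add: algebra_simps)
  have f1: "gB4 (a * m + b) = m" using e1 m_def by simp
  have f2: "gB4 (a * M + b) = M" using e2 M_def by simp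
  have d1: "gd (a * m + b) = 0" using e1 gd_shift[of 0] by simp
  have d2: "gd (a * M + b) = 0" using e2 gd_shift[of s] s2 by simp
  define W where "W = (vector [vector [a, b, 0], 0, 0] :: real^3^3)"
  define p1 where "p1 = (vector [m, 1, 1] :: real^3)"
  define p2 where "p2 = (vector [M, 1, 1] :: real^3)"
  have fp1: "fB4 W p1 = p1" unfolding W_def p1_def
    by (simp add: vec_eq_iff forall_3 fB4_comp f1)
  have fp2: "fB4 W p2 = p2" unfolding W_def p2_def
    by (simp add: vec_eq_iff forall_3 fB4_comp f2)
  have ne: "p1 \<noteq> p2" unfolding p1_def p2_def using Mm by (auto simp: vec_eq_iff forall_3)
  have P1: "\<exists>\<epsilon> c K :: real. \<epsilon> > 0 \<and> c > 0 \<and> 0 \<le> K \<and> K < 1 \<and>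
        (\<forall>x0 :: real^3. x0 $ 1 \<in> {p1 $ 1 - \<epsilon> .. p1 $ 1 + \<epsilon>} \<and> x0 $ 2 = 1 \<and> x0 $ 3 = 1 \<longrightarrow>
           ((\<lambda>t. (fB4 W ^^ t) x0) \<longlonglongrightarrow> p1) \<and>
           (\<forall>t::nat. t \<ge> 2 \<longrightarrow> infnorm ((fB4 W ^^ t) x0 - p1) \<le> K ^ t * c * \<epsilon>))"
    using part[OF f1 d1] unfolding W_def p1_def by simp
  have P2: "\<exists>\<epsilon> c K :: real. \<epsilon> > 0 \<and> c > 0 \<and> 0 \<le> K \<and> K < 1 \<and>
        (\<forall>x0 :: real^3. x0 $ 1 \<in> {p2 $ 1 - \<epsilon> .. p2 $ 1 + \<epsilon>} \<and> x0 $ 2 = 1 \<and> x0 $ 3 = 1 \<longrightarrow>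
           ((\<lambda>t. (fB4 W ^^ t) x0) \<longlonglongrightarrow> p2) \<and>
           (\<forall>t::nat. t \<ge> 2 \<longrightarrow> infnorm ((fB4 W ^^ t) x0 - p2) \<le> K ^ t * c * \<epsilon>))"
    using part[OF f2 d2] unfolding W_def p2_def by simp
  show ?thesis
    using fp1 fp2 ne P1 P2 by (intro exI[of _ W] exI[of _ p1] exI[of _ p2]) simp
qed

end
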